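(* Let $\alpha>0$ and consider the nonlinear program described in the context, and let $X$ be an open set containing $\mathcal{C}$ on which $\mathcal{G}_\alpha$ is well defined. Let $x\in X$ with $\Lambda_\alpha(x)\ne\emptyset$. Then for every $(u,v)\in\Lambda_\alpha(x)$, $\nabla f(x)^\top\mathcal{G}_\alpha(x)=-\|\mathcal{G}_\alpha(x)\|^2+\alpha u^\top g(x)+\alpha v^\top h(x)$. Moreover, if $x\in\mathcal{C}$ and MFCQ holds at $x$, then $\nabla f(x)^\top\mathcal{G}_\alpha(x)\le0$, with equality if and only if $x\in X_{KKT}$.
   Context: Let $f:\mathbb{R}^n\to\mathbb{R}$, $g:\mathbb{R}^n\to\mathbb{R}^m$, $h:\mathbb{R}^n\to\mathbb{R}^k$ be continuously differentiable; program: minimize $f(x)$ subject to $g(x)\le0$, $h(x)=0$; feasible set $\mathcal{C}$; $I_0(x)=\{i:g_i(x)=0\}$. MFCQ at $x$: $\{\nabla h_j(x)\}_{j=1}^k$ linearly independent and some $\xi$ has $\nabla h_j(x)^\top\xi=0$ for all $j$ and $\nabla g_i(x)^\top\xi<0$ for $i\in I_0(x)$. $X_{KKT}$ is the set of $x^*$ admitting $u^*\in\mathbb{R}^m,v^*\in\mathbb{R}^k$ with $\nabla f(x^* )+\frac{\partial g}{\partial x}(x^* )^\top u^*+\frac{\partial h}{\partial x}(x^* )^\top v^*=0$, $g(x^* )\le0$, $h(x^* )=0$, $u^*\ge0$, $(u^* )^\top g(x^* )=0$. With $G=\frac{\partial g}{\partial x}(x)$, $H=\frac{\partial h}{\partial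 x}(x)$: $\mathcal{G}_\alpha(x)$ is the unique minimizer over $\xi$ of $\frac12\|\xi+\nabla f(x)\|^2$ subject to $G\xi\le-\alpha g(x)$, $H\xi=-\alpha h(x)$; $\Lambda_\alpha(x)$ is the set of $(u,v)\in\mathbb{R}^m_{\ge0}\times\mathbb{R}^k$ for which some $\xi$ satisfies $\xi+\nabla f(x)+G^\top u+H^\top v=0$, $G\xi+\alpha g(x)\le0$, $H\xi+\alpha h(x)=0$, $u\ge0$, $u^\top(G\xi+\alpha g(x))=0$. The quantity $\nabla f(x)^\top\mathcal{G}_\alpha(x)$ is the (upper-right Dini) derivative of $f$ along the safe gradient flow $\dot x=\mathcal{G}_\alpha(x)$. *)

theory Defs
  imports "HOL-Analysis.Analysis"
begin

text \<open>Data: gradient Df of f, Jacobians Jg (m x n) and Jh (k x n), as functions of x.\<close>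

definition feasible_set ::
  "(real^'n \<Rightarrow> real^'m) \<Rightarrow> (real^'n \<Rightarrow> real^'k) \<Rightarrow> (real^'n) set" where
  "feasible_set g h = {x. (\<forall>i. g x $ i \<le> 0) \<and> h x = 0}"

definition MFCQ ::
  "(real^'n \<Rightarrow> real^'m) \<Rightarrow> (real^'n \<Rightarrow> real^'n^'m) \<Rightarrow> (real^'n \<Rightarrow> real^'n^'k)
   \<Rightarrow> real^'n \<Rightarrow> bool" where
  "MFCQ g Jg Jh x \<longleftrightarrow>
     (\<forall>c :: 'k \<Rightarrow> real. (\<Sum>j\<in>UNIV. c j *\<^sub>R row j (Jh x)) = 0 \<longrightarrow> (\<forall>j. c j = 0)) \<and>
     (\<exists>\<xi>. (\<forall>j. row j (Jh x) \<bullet> \<xi> = 0) \<and>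
          (\<forall>i. g x $ i = 0 \<longrightarrow> row i (Jg x) \<bullet> \<xi> < 0))"

definition KKT_set ::
  "(real^'n \<Rightarrow> real^'n) \<Rightarrow> (real^'n \<Rightarrow> real^'m) \<Rightarrow> (real^'n \<Rightarrow> real^'k)
   \<Rightarrow> (real^'n \<Rightarrow> real^'n^'m) \<Rightarrow> (real^'n \<Rightarrow> real^'n^'k) \<Rightarrow> (real^'n) set" where
  "KKT_set Df g h Jg Jh = {x. \<exists>(u::real^'m) (v::real^'k).
      Df x + transpose (Jg x) *v u + transpose (Jh x) *v v = 0 \<and>
      (\<forall>i. g x $ i \<le> 0) \<and> h x = 0 \<and> (\<forall>i. u $ i \<ge> 0) \<and> u \<bullet> g x = 0}"

definition qp_feasible ::
  "real \<Rightarrow> (real^'n \<Rightarrow> real^'m) \<Rightarrow> (real^'n \<Rightarrow> real^'k)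
   \<Rightarrow> (real^'n \<Rightarrow> real^'n^'m) \<Rightarrow> (real^'n \<Rightarrow> real^'n^'k) \<Rightarrow> real^'n \<Rightarrow> (real^'n) set" where
  "qp_feasible \<alpha> g h Jg Jh x =
     {\<xi>. (\<forall>i. (Jg x *v \<xi>) $ i \<le> - \<alpha> * g x $ i) \<and> Jh x *v \<xi> = - (\<alpha> *\<^sub>R h x)}"

definition qp_minimizer ::
  "real \<Rightarrow> (real^'n \<Rightarrow> real^'n) \<Rightarrow> (real^'n \<Rightarrow> real^'m) \<Rightarrow> (real^'n \<Rightarrow> real^'k)
   \<Rightarrow> (real^'n \<Rightarrow> real^'n^'m) \<Rightarrow> (real^'n \<Rightarrow> real^'n^'k) \<Rightarrow> real^'n \<Rightarrow> real^'n \<Rightarrow> bool" where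
  "qp_minimizer \<alpha> Df g h Jg Jh x \<xi> \<longleftrightarrow>
     \<xi> \<in> qp_feasible \<alpha> g h Jg Jh x \<and>
     (\<forall>\<eta>\<in>qp_feasible \<alpha> g h Jg Jh x.
        (1/2) * (norm (\<xi> + Df x))\<^sup>2 \<le> (1/2) * (norm (\<eta> + Df x))\<^sup>2)"

text \<open>The safe gradient flow vector field: the unique minimizer (when it exists).\<close>
definition safe_grad ::
  "real \<Rightarrow> (real^'n \<Rightarrow> real^'n) \<Rightarrow> (real^'n \<Rightarrow> real^'m) \<Rightarrow> (real^'n \<Rightarrow> real^'k)
   \<Rightarrow> (real^'n \<Rightarrow> real^'n^'m) \<Rightarrow> (real^'n \<Rightarrow> real^'n^'k) \<Rightarrow> real^'n \<Rightarrow> real^'n" where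
  "safe_grad \<alpha> Df g h Jg Jh x = (THE \<xi>. qp_minimizer \<alpha> Df g h Jg Jh x \<xi>)"

definition Lambda_set ::
  "real \<Rightarrow> (real^'n \<Rightarrow> real^'n) \<Rightarrow> (real^'n \<Rightarrow> real^'m) \<Rightarrow> (real^'n \<Rightarrow> real^'k)
   \<Rightarrow> (real^'n \<Rightarrow> real^'n^'m) \<Rightarrow> (real^'n \<Rightarrow> real^'n^'k) \<Rightarrow> real^'n \<Rightarrow> ((real^'m) \<times> (real^'k)) set" where
  "Lambda_set \<alpha> Df g h Jg Jh x = {(u, v). (\<forall>i. u $ i \<ge> 0) \<and> (\<exists>\<xi>.
      \<xi> + Df x + transpose (Jg x) *v u + transpose (Jh x) *v v = 0 \<and>
      (\<forall>i. (Jg x *v \<xi>) $ i + \<alpha> * g x $ i \<le> 0) \<and>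
      Jh x *v \<xi> + \<alpha> *\<^sub>R h x = 0 \<and>
      u \<bullet> (Jg x *v \<xi> + \<alpha> *\<^sub>R g x) = 0)}"

end

theory Submission
  imports Defs
begin


lemma tr_inner: "(transpose (A::real^'a^'b) *v u) \<bullet> w = u \<bullet> (A *v w)"
proof -
  have "transpose A *v u = u v* A" by simp
  thus ?thesis by (simp add: dot_lmul_matrix)
qed

lemma nonneg_nonpos_inner:
  fixes u w :: "real^'m"
  assumes "\<forall>i. u $ i \<ge> 0" "\<forall>i. w $ i \<le> 0"
  shows "u \<bullet> w \<le> 0"
  unfolding inner_vec_def
  by (rule sum_nonpos) (simp add: assms mult_nonneg_nonpos)

lemma kkt_min:
  fixes Df :: "real^'n \<Rightarrow> real^'n"
    and g :: "real^'n \<Rightarrow> real^'m" and Jg :: "real^'n \<Rightarrow> real^'n^'m"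
    and h :: "real^'n \<Rightarrow> real^'k" and Jh :: "real^'n \<Rightarrow> real^'n^'k"
  assumes u0: "\<forall>i. u $ i \<ge> 0"
    and st: "\<xi> + Df x + transpose (Jg x) *v u + transpose (Jh x) *v v = 0"
    and pg: "\<forall>i. (Jg x *v \<xi>) $ i + \<alpha> * g x $ i \<le> 0"
    and ph: "Jh x *v \<xi> + \<alpha> *\<^sub>R h x = 0"
    and cs: "u \<bullet> (Jg x *v \<xi> + \<alpha> *\<^sub>R g x) = 0"
  shows "qp_minimizer \<alpha> Df g h Jg Jh x \<xi>"
  unfolding qp_minimizer_def
proof (intro conjI ballI)
  show "\<xi> \<in> qp_feasible \<alpha> g h Jg Jh x"
    unfolding qp_feasible_def
  proof (intro CollectI conjI allI)
    fix i show "(Jg x *v \<xi>) $ i \<le> - \<alpha> * g x $ i" using pg[rule_format, of i] by linarith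
  next
    show "Jh x *v \<xi> = - (\<alpha> *\<^sub>R h x)" using ph by (simp add: eq_neg_iff_add_eq_0)
  qed
  fix \<eta> assume "\<eta> \<in> qp_feasible \<alpha> g h Jg Jh x"
  hence eg: "\<forall>i. (Jg x *v \<eta>) $ i \<le> - \<alpha> * g x $ i" and eh: "Jh x *v \<eta> = - (\<alpha> *\<^sub>R h x)"
    unfolding qp_feasible_def by auto
  have d: "\<xi> + Df x = - (transpose (Jg x) *v u) - transpose (Jh x) *v v"
    using st by (simp add: algebra_simps eq_neg_iff_add_eq_0)
  have "(\<xi> + Df x) \<bullet> (\<eta> - \<xi>) = - (u \<bullet> (Jg x *v (\<eta> - \<xi>))) - v \<bullet> (Jh x *v (\<eta> - \<xi>))"
    unfolding d by (simp add: inner_diff_left tr_inner dot_lmul_matrix)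
  also have "Jh x *v (\<eta> - \<xi>) = 0"
  proof -
    have "Jh x *v \<eta> = Jh x *v \<xi>" using eh ph by (metis add_right_cancel eq_neg_iff_add_eq_0)
    thus ?thesis by (simp add: matrix_vector_mult_diff_distrib)
  qed
  also have "u \<bullet> (Jg x *v (\<eta> - \<xi>)) = u \<bullet> (Jg x *v \<eta> + \<alpha> *\<^sub>R g x) - u \<bullet> (Jg x *v \<xi> + \<alpha> *\<^sub>R g x)"
    by (simp add: matrix_vector_mult_diff_distrib inner_diff_right inner_add_right)
  also have "\<dots> = u \<bullet> (Jg x *v \<eta> + \<alpha> *\<^sub>R g x)" using cs by simp
  finally have key: "(\<xi> + Df x) \<bullet> (\<eta> - \<xi>) = - (u \<bullet> (Jg x *v \<eta> + \<alpha> *\<^sub>R g x))" by simp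
  have "u \<bullet> (Jg x *v \<eta> + \<alpha> *\<^sub>R g x) \<le> 0"
  proof (rule nonneg_nonpos_inner[OF u0], rule allI)
    fix i show "(Jg x *v \<eta> + \<alpha> *\<^sub>R g x) $ i \<le> 0" using eg[rule_format, of i] by simp
  qed
  hence k2: "(\<xi> + Df x) \<bullet> (\<eta> - \<xi>) \<ge> 0" using key by simp
  have sum: "(\<xi> + Df x) + (\<eta> - \<xi>) = \<eta> + Df x" by simp
  have e: "(\<xi> + Df x) \<bullet> (\<eta> - \<xi>) = ((norm (\<eta> + Df x))\<^sup>2 - (norm (\<xi> + Df x))\<^sup>2 - (norm (\<eta> - \<xi>))\<^sup>2) / 2"
    using dot_norm[of "\<xi> + Df x" "\<eta> - \<xi>"] unfolding sum .
  define A where "A = (norm (\<eta> + Df x))\<^sup>2"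
  define B where "B = (norm (\<xi> + Df x))\<^sup>2"
  define C where "C = (norm (\<eta> - \<xi>))\<^sup>2"
  have "0 \<le> C" unfolding C_def by simp
  moreover have "(\<xi> + Df x) \<bullet> (\<eta> - \<xi>) = (A - B - C) / 2" using e unfolding A_def B_def C_def .
  ultimately have "0 \<le> (A - B - C) / 2" "0 \<le> C" using k2 by simp_all
  hence "B \<le> A" by (simp add: field_simps)
  thus "(1/2) * (norm (\<xi> + Df x))\<^sup>2 \<le> (1/2) * (norm (\<eta> + Df x))\<^sup>2"
    unfolding A_def B_def by simp
qed

theorem mainTheorem11:
  fixes f :: "real^'n \<Rightarrow> real" and Df :: "real^'n \<Rightarrow> real^'n"
    and g :: "real^'n \<Rightarrow> real^'m" and Jg :: "real^'n \<Rightarrow> real^'n^'m"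
    and h :: "real^'n \<Rightarrow> real^'k" and Jh :: "real^'n \<Rightarrow> real^'n^'k"
    and \<alpha> :: real and X :: "(real^'n) set" and x :: "real^'n"
  assumes f_deriv: "\<And>y. (f has_derivative (\<lambda>d. Df y \<bullet> d)) (at y)"
    and f_C1: "continuous_on UNIV Df"
    and g_deriv: "\<And>y. (g has_derivative (\<lambda>d. Jg y *v d)) (at y)"
    and g_C1: "continuous_on UNIV Jg"
    and h_deriv: "\<And>y. (h has_derivative (\<lambda>d. Jh y *v d)) (at y)"
    and h_C1: "continuous_on UNIV Jh"
    and alpha_pos: "\<alpha> > 0"
    and X_open: "open X"
    and C_sub: "feasible_set g h \<subseteq> X"
    and G_welldef: "\<forall>y\<in>X. \<exists>!\<xi>. qp_minimizer \<alpha> Df g h Jg Jh y \<xi>"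
    and x_in: "x \<in> X"
    and Lambda_ne: "Lambda_set \<alpha> Df g h Jg Jh x \<noteq> {}"
  shows "(\<forall>(u, v) \<in> Lambda_set \<alpha> Df g h Jg Jh x.
            Df x \<bullet> safe_grad \<alpha> Df g h Jg Jh x
              = - (norm (safe_grad \<alpha> Df g h Jg Jh x))\<^sup>2 + \<alpha> * (u \<bullet> g x) + \<alpha> * (v \<bullet> h x))
       \<and> (x \<in> feasible_set g h \<and> MFCQ g Jg Jh x \<longrightarrow>
            Df x \<bullet> safe_grad \<alpha> Df g h Jg Jh x \<le> 0 \<and>
            (Df x \<bullet> safe_grad \<alpha> Df g h Jg Jh x = 0 \<longleftrightarrow> x \<in> KKT_set Df g h Jg Jh))"
proof -
  let ?S = "safe_grad \<alpha> Df g h Jg Jh x"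
  have sg: "\<And>\<xi>. qp_minimizer \<alpha> Df g h Jg Jh x \<xi> \<Longrightarrow> ?S = \<xi>"
    using G_welldef x_in unfolding safe_grad_def by (metis the1_equality)
  have P1: "Df x \<bullet> ?S = - (norm ?S)\<^sup>2 + \<alpha> * (u \<bullet> g x) + \<alpha> * (v \<bullet> h x)"
    if uv: "(u, v) \<in> Lambda_set \<alpha> Df g h Jg Jh x" for u v
  proof -
    from uv obtain \<xi> where u0: "\<forall>i. u $ i \<ge> 0"
      and st: "\<xi> + Df x + transpose (Jg x) *v u + transpose (Jh x) *v v = 0"
      and pg: "\<forall>i. (Jg x *v \<xi>) $ i + \<alpha> * g x $ i \<le> 0"
      and ph: "Jh x *v \<xi> + \<alpha> *\<^sub>R h x = 0"
      and cs: "u \<bullet> (Jg x *v \<xi> + \<alpha> *\<^sub>R g x) = 0"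
      unfolding Lambda_set_def by auto
    have S: "?S = \<xi>" by (rule sg[OF kkt_min[where Df=Df and g=g and h=h and Jg=Jg and Jh=Jh and x=x, OF u0 st pg ph cs]])
    have d: "Df x = - \<xi> - transpose (Jg x) *v u - transpose (Jh x) *v v"
      using st by (simp add: algebra_simps eq_neg_iff_add_eq_0)
    have "Df x \<bullet> \<xi> = - (\<xi> \<bullet> \<xi>) - u \<bullet> (Jg x *v \<xi>) - v \<bullet> (Jh x *v \<xi>)"
      unfolding d by (simp add: inner_diff_left tr_inner dot_lmul_matrix)
    moreover have "u \<bullet> (Jg x *v \<xi>) = - \<alpha> * (u \<bullet> g x)"
      using cs by (simp add: inner_add_right)
    moreover have "Jh x *v \<xi> = - (\<alpha> *\<^sub>R h x)"
      using ph by (simp add: eq_neg_iff_add_eq_0)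
    ultimately show ?thesis unfolding S by (simp add: power2_norm_eq_inner)
  qed
  have P2: "Df x \<bullet> ?S \<le> 0 \<and> (Df x \<bullet> ?S = 0 \<longleftrightarrow> x \<in> KKT_set Df g h Jg Jh)"
    if feas: "x \<in> feasible_set g h"
  proof -
    from feas have g0: "\<forall>i. g x $ i \<le> 0" and h0: "h x = 0"
      unfolding feasible_set_def by auto
    from Lambda_ne obtain u v where uv: "(u, v) \<in> Lambda_set \<alpha> Df g h Jg Jh x" by auto
    from uv obtain \<xi> where u0: "\<forall>i. u $ i \<ge> 0"
      and st: "\<xi> + Df x + transpose (Jg x) *v u + transpose (Jh x) *v v = 0"
      and pg: "\<forall>i. (Jg x *v \<xi>) $ i + \<alpha> * g x $ i \<le> 0"
      and ph: "Jh x *v \<xi> + \<alpha> *\<^sub>R h x = 0"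
      and cs: "u \<bullet> (Jg x *v \<xi> + \<alpha> *\<^sub>R g x) = 0"
      unfolding Lambda_set_def by auto
    have S: "?S = \<xi>" by (rule sg[OF kkt_min[where Df=Df and g=g and h=h and Jg=Jg and Jh=Jh and x=x, OF u0 st pg ph cs]])
    have ug: "u \<bullet> g x \<le> 0" by (rule nonneg_nonpos_inner[OF u0 g0])
    have eq: "Df x \<bullet> ?S = - (norm ?S)\<^sup>2 + \<alpha> * (u \<bullet> g x)"
      using P1[OF uv] h0 by simp
    have au: "\<alpha> * (u \<bullet> g x) \<le> 0" using ug alpha_pos by (simp add: mult_nonneg_nonpos)
    have N0: "0 \<le> (norm ?S)\<^sup>2" by simp
    have le: "Df x \<bullet> ?S \<le> 0" using eq au N0 by linarith
    have iff: "Df x \<bullet> ?S = 0 \<longleftrightarrow> x \<in> KKT_set Df g h Jg Jh"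
    proof
      assume z: "Df x \<bullet> ?S = 0"
      hence "(norm ?S)\<^sup>2 = 0" "\<alpha> * (u \<bullet> g x) = 0" using eq au N0 by linarith+
      hence x0: "\<xi> = 0" and ug0: "u \<bullet> g x = 0" using S alpha_pos by auto
      show "x \<in> KKT_set Df g h Jg Jh"
        unfolding KKT_set_def using st x0 ug0 g0 h0 u0 by auto
    next
      assume "x \<in> KKT_set Df g h Jg Jh"
      then obtain u' v' where st': "Df x + transpose (Jg x) *v u' + transpose (Jh x) *v v' = 0"
        and u0': "\<forall>i. u' $ i \<ge> 0" and c': "u' \<bullet> g x = 0"
        unfolding KKT_set_def by auto
      have "qp_minimizer \<alpha> Df g h Jg Jh x 0"
        by (rule kkt_min[where Df=Df and g=g and h=h and Jg=Jg and Jh=Jh and x=x and v=v', OF u0']) (use st' c' g0 h0 alpha_pos in \<open>auto simp: mult_nonneg_nonpos\<close>)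
      hence "?S = 0" by (rule sg)
      thus "Df x \<bullet> ?S = 0" by simp
    qed
    show ?thesis using le iff by blast
  qed
  have A: "\<forall>(u, v) \<in> Lambda_set \<alpha> Df g h Jg Jh x.
            Df x \<bullet> ?S = - (norm ?S)\<^sup>2 + \<alpha> * (u \<bullet> g x) + \<alpha> * (v \<bullet> h x)"
  proof (rule ballI)
    fix p assume p: "p \<in> Lambda_set \<alpha> Df g h Jg Jh x"
    obtain a b where ab: "p = (a, b)" by (cases p)
    have "Df x \<bullet> ?S = - (norm ?S)\<^sup>2 + \<alpha> * (a \<bullet> g x) + \<alpha> * (b \<bullet> h x)"
      by (rule P1) (use p ab in simp)
    thus "case p of (u, v) \<Rightarrow> Df x \<bullet> ?S = - (norm ?S)\<^sup>2 + \<alpha> * (u \<bullet> g x) + \<alpha> * (v \<bullet> h x)"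
      unfolding ab by (simp only: prod.case)
  qed
  show ?thesis
  proof (rule conjI[OF A], rule impI)
    assume "x \<in> feasible_set g h \<and> MFCQ g Jg Jh x"
    thus "Df x \<bullet> ?S \<le> 0 \<and> (Df x \<bullet> ?S = 0 \<longleftrightarrow> x \<in> KKT_set Df g h Jg Jh)"
      using P2 by simp
  qed
qed

end
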